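(* Let $n,d\ge 2$ and $\mathbf h\in\mathbb{R}^{\binom{n+d-1}{d}}$ with $N(\mathbf h)\ge 1$ and $J_{n,d}\mathbf h\ge 0$. Define $\boldsymbol\gamma_0=\mathbf h_0$ and $\boldsymbol\gamma_i=J_{n-1,i-1}\mathbf h_{i-1}+\mathbf h_i$ for $1\le i\le d$. If exactly one of the numbers $R(\boldsymbol\gamma_0),\dots,R(\boldsymbol\gamma_d)$ is nonzero, then $$R(J_{n,d}\mathbf h)\ge \binom{n+1}{3}+1.$$
   Context: For a real vector $\mathbf x$, $N(\mathbf x)$ and $R(\mathbf x)$ denote the numbers of negative and nonzero components; inequalities are componentwise. $J_{m,j}$ is the matrix, with respect to the left lexicographic bases of degree-$j$ and degree-$(j+1)$ monomials in $m$ variables, of multiplication by the sum of the variables ($J_{n,j}$ in $x_1,\dots,x_n$, $J_{n-1,j}$ in $x_2,\dots,x_n$). If $\mathbf h$ is the coordinate vector of $A(x)=\sum_{j=0}^d x_1^{d-j}A_j(x_2,\dots,x_n)$ ($A_j$ homogeneous of degree $j$), then $\mathbf h_j$ is the coordinate vector of $A_j$ in the left lexicographic basis of degree-$j$ monomials in $x_2,\dots,x_n$, and $\mathbf h=(\mathbf h_0,\dots,\mathbf h_d)$. *)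

theory Defs
  imports Complex_Main
begin

text \<open>Monomials are represented by exponent vectors \<open>nat \<Rightarrow> nat\<close>; variable x_(k+1)
  corresponds to index k.  \<open>mons V j\<close> is the set of monomials of degree j in the
  variables indexed by the finite set V.  A coordinate vector with respect to the
  (left lexicographic) monomial basis is represented by the function assigning to each
  monomial its coordinate; only its values on the relevant monomial set matter.\<close>

definition mons :: "nat set \<Rightarrow> nat \<Rightarrow> (nat \<Rightarrow> nat) set" where
  "mons V j = {\<alpha>. (\<forall>i. i \<notin> V \<longrightarrow> \<alpha> i = 0) \<and> (\<Sum>i\<in>V. \<alpha> i) = j}"

text \<open>Multiplication by the sum of the variables in V (the matrix J):
  coordinate of the product at monomial beta.\<close>
definition Jmul :: "nat set \<Rightarrow> ((nat \<Rightarrow> nat) \<Rightarrow> real) \<Rightarrow> (nat \<Rightarrow> nat) \<Rightarrow> real" where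
  "Jmul V h \<beta> = (\<Sum>i\<in>V. if 1 \<le> \<beta> i then h (\<beta>(i := \<beta> i - 1)) else 0)"

definition Nneg :: "(nat \<Rightarrow> nat) set \<Rightarrow> ((nat \<Rightarrow> nat) \<Rightarrow> real) \<Rightarrow> nat" where
  "Nneg D x = card {\<alpha>\<in>D. x \<alpha> < 0}"

definition Rnz :: "(nat \<Rightarrow> nat) set \<Rightarrow> ((nat \<Rightarrow> nat) \<Rightarrow> real) \<Rightarrow> nat" where
  "Rnz D x = card {\<alpha>\<in>D. x \<alpha> \<noteq> 0}"

text \<open>\<open>hpart d h j\<close>: the block h_j, i.e. the coordinates of A_j in the monomials of
  degree j in x_2..x_n (indices 1..n-1): coefficient of x_1^(d-j) * beta in A.\<close>
definition hpart :: "nat \<Rightarrow> ((nat \<Rightarrow> nat) \<Rightarrow> real) \<Rightarrow> nat \<Rightarrow> (nat \<Rightarrow> nat) \<Rightarrow> real" where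
  "hpart d h j \<beta> = h (\<beta>(0 := d - j))"

definition gam :: "nat \<Rightarrow> nat \<Rightarrow> ((nat \<Rightarrow> nat) \<Rightarrow> real) \<Rightarrow> nat \<Rightarrow> (nat \<Rightarrow> nat) \<Rightarrow> real" where
  "gam n d h i = (if i = 0 then hpart d h 0
     else (\<lambda>\<beta>. Jmul {1..<n} (hpart d h (i - 1)) \<beta> + hpart d h i \<beta>))"

end

theory Submission imports Defs "HOL-Library.Multiset" "HOL-Library.FuncSet" begin

lemma mons_iff: "\<alpha> \<in> mons V j \<longleftrightarrow> (\<forall>i. i \<notin> V \<longrightarrow> \<alpha> i = 0) \<and> sum \<alpha> V = j"
  by (simp add: mons_def)

lemma finite_mons:
  assumes "finite V" shows "finite (mons V j)"
proof -
  have "mons V j \<subseteq> (\<lambda>f i. if i \<in> V then f i else 0) ` (PiE V (\<lambda>_. {..j}))"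
  proof
    fix \<alpha> assume a: "\<alpha> \<in> mons V j"
    have le: "\<alpha> i \<le> j" if "i \<in> V" for i
      using a that assms by (auto simp: mons_def intro!: member_le_sum)
    have "restrict \<alpha> V \<in> PiE V (\<lambda>_. {..j})" using le by (auto simp: PiE_def Pi_def extensional_def)
    moreover have "\<alpha> = (\<lambda>i. if i \<in> V then restrict \<alpha> V i else 0)"
      using a by (auto simp: mons_def)
    ultimately show "\<alpha> \<in> (\<lambda>f i. if i \<in> V then f i else 0) ` (PiE V (\<lambda>_. {..j}))" by blast
  qed
  moreover have "finite (PiE V (\<lambda>_. {..j}))" using assms by (simp add: finite_PiE)
  ultimately show ?thesis by (meson finite_surj)
qed

lemma sum_upd:
  assumes "finite V" "i \<in> V"
  shows "sum (\<alpha>(i := x)) V = sum \<alpha> V - \<alpha> i + (x::nat)"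
proof -
  have "sum (\<alpha>(i := x)) V = x + sum (\<alpha>(i := x)) (V - {i})" using assms by (simp add: sum.remove)
  also have "sum (\<alpha>(i := x)) (V - {i}) = sum \<alpha> (V - {i})" by (rule sum.cong) auto
  finally show ?thesis using assms by (simp add: sum.remove)
qed

lemma mons_dec:
  assumes "finite V" "\<alpha> \<in> mons V (Suc j)" "i \<in> V" "1 \<le> \<alpha> i"
  shows "\<alpha>(i := \<alpha> i - 1) \<in> mons V j"
  using assms sum_upd[OF assms(1,3), of \<alpha> "\<alpha> i - 1"] member_le_sum[of i V \<alpha>]
  by (auto simp: mons_def)

lemma mons_inc:
  assumes "finite V" "\<alpha> \<in> mons V j" "i \<in> V"
  shows "\<alpha>(i := \<alpha> i + m) \<in> mons V (j + m)"
  using assms sum_upd[OF assms(1,3), of \<alpha> "\<alpha> i + m"] member_le_sum[of i V \<alpha>]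
  by (auto simp: mons_def)

lemma mons_add:
  assumes "\<alpha> \<in> mons V j" "\<gamma> \<in> mons V t"
  shows "(\<lambda>i. \<alpha> i + \<gamma> i) \<in> mons V (j + t)"
  using assms by (auto simp: mons_def sum.distrib)

lemma mons_pos:
  assumes "\<gamma> \<in> mons V (Suc t)" obtains i where "i \<in> V" "1 \<le> \<gamma> i"
proof -
  have "sum \<gamma> V \<noteq> 0" using assms by (simp add: mons_def)
  then obtain i where "i \<in> V" "\<gamma> i \<noteq> 0" by (meson sum.neutral)
  then show ?thesis using that by auto
qed

lemma Jmul_cong:
  assumes "finite V" "\<forall>\<beta>\<in>mons V j. f \<beta> = g \<beta>" "\<beta> \<in> mons V (Suc j)"
  shows "Jmul V f \<beta> = Jmul V g \<beta>"
  unfolding Jmul_def using assms mons_dec[OF assms(1,3)] by (intro sum.cong) auto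

lemma Jmul_scale: "Jmul V (\<lambda>\<beta>. c * f \<beta>) \<beta> = c * Jmul V f \<beta>"
  unfolding Jmul_def sum_distrib_left by (rule sum.cong) auto

lemma Jmul_nonneg:
  assumes "finite V" "\<forall>\<beta>\<in>mons V j. f \<beta> \<ge> 0" "\<beta> \<in> mons V (Suc j)"
  shows "Jmul V f \<beta> \<ge> 0"
  unfolding Jmul_def using assms mons_dec[OF assms(1,3)] by (intro sum_nonneg) auto

lemma Jmul_pos:
  assumes "finite V" "\<forall>\<beta>\<in>mons V j. f \<beta> \<ge> 0" "\<beta> \<in> mons V (Suc j)"
    "i \<in> V" "1 \<le> \<beta> i" "f (\<beta>(i := \<beta> i - 1)) > 0"
  shows "Jmul V f \<beta> > 0"
proof -
  let ?g = "\<lambda>k. if 1 \<le> \<beta> k then f (\<beta>(k := \<beta> k - 1)) else 0"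
  have "?g i \<le> sum ?g V"
    using assms mons_dec[OF assms(1,3)] by (intro member_le_sum) auto
  then show ?thesis using assms by (simp add: Jmul_def)
qed

lemma card_mons3:
  assumes "finite V" shows "card (mons V 3) \<ge> (card V + 2) choose 3"
proof -
  have "card (multisets_of_size V 3) = (card V + 2) choose 3"
    using card_multisets_of_size[OF assms, of 3] by simp
  moreover have "card (multisets_of_size V 3) \<le> card (mons V 3)"
  proof (rule card_inj_on_le[of count])
    show "inj_on count (multisets_of_size V 3)" by (simp add: inj_on_def count_inject)
    show "count ` multisets_of_size V 3 \<subseteq> mons V 3"
    proof
      fix c assume "c \<in> count ` multisets_of_size V 3"
      then obtain M where M: "set_mset M \<subseteq> V" "size M = 3" "c = count M"
        by (auto simp: multisets_of_size_def)
      have "size M = sum (count M) (set_mset M)" by (simp add: size_multiset_overloaded_eq)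
      also have "\<dots> = sum (count M) V"
        using M assms by (intro sum.mono_neutral_left) (auto simp: count_eq_zero_iff)
      finally show "c \<in> mons V 3" using M by (auto simp: mons_def count_eq_zero_iff)
    qed
    show "finite (mons V 3)" using assms by (rule finite_mons)
  qed
  ultimately show ?thesis by simp
qed

lemma mons_zero:
  assumes "finite V" "\<gamma> \<in> mons V 0" shows "\<gamma> = (\<lambda>_. 0)"
  using assms by (auto simp: mons_def fun_eq_iff)

lemma zero_mons: "(\<lambda>_. 0) \<in> mons V 0"
  by (simp add: mons_def)

lemma mons_emb:
  assumes "n \<ge> 1" "\<beta> \<in> mons {1..<n} i"
  shows "\<beta>(0 := x) \<in> mons {0..<n} (x + i)"
proof -
  have e: "{0..<n} = insert 0 {1..<n}" using assms(1) by auto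
  have "sum (\<beta>(0 := x)) {1..<n} = sum \<beta> {1..<n}" by (rule sum.cong) auto
  then show ?thesis using assms by (auto simp: mons_def e)
qed

lemma Jmul_block:
  assumes "n \<ge> 1" "\<beta> \<in> mons {1..<n} i" "i \<le> d"
  shows "Jmul {0..<n} h (\<beta>(0 := d + 1 - i)) = gam n d h i \<beta>"
proof -
  have e: "{0..<n} = insert 0 {1..<n}" using assms(1) by auto
  have b0: "\<beta> 0 = 0" using assms by (auto simp: mons_def)
  have J: "Jmul {0..<n} h (\<beta>(0 := d + 1 - i)) = h (\<beta>(0 := d - i)) +
     (\<Sum>k\<in>{1..<n}. if 1 \<le> \<beta> k then h (\<beta>(0 := d + 1 - i, k := \<beta> k - 1)) else 0)"
    unfolding Jmul_def e using assms(3)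
    by (subst sum.insert) (auto intro!: sum.cong)
  show ?thesis
  proof (cases "i = 0")
    case True
    then have "\<forall>k\<in>{1..<n}. \<beta> k = 0" using assms(2) by (auto simp: mons_def)
    then show ?thesis using True J by (simp add: gam_def hpart_def)
  next
    case False
    have "(\<Sum>k\<in>{1..<n}. if 1 \<le> \<beta> k then h (\<beta>(0 := d + 1 - i, k := \<beta> k - 1)) else 0)
        = Jmul {1..<n} (hpart d h (i - 1)) \<beta>"
      unfolding Jmul_def hpart_def
    proof (rule sum.cong)
      fix k assume "k \<in> {1..<n}"
      then have "\<beta>(0 := d + 1 - i, k := \<beta> k - 1) = \<beta>(k := \<beta> k - 1, 0 := d - (i - 1))"
        using False assms(3) by (auto simp: fun_eq_iff)
      then show "(if 1 \<le> \<beta> k then h (\<beta>(0 := d + 1 - i, k := \<beta> k - 1)) else 0) =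
         (if 1 \<le> \<beta> k then h (\<beta>(k := \<beta> k - 1, 0 := d - (i - 1))) else 0)" by simp
    qed simp
    then show ?thesis using False J by (simp add: gam_def hpart_def)
  qed
qed

lemma Jmul_top:
  assumes "n \<ge> 1" "\<beta> 0 = 0"
  shows "Jmul {0..<n} h \<beta> = Jmul {1..<n} (hpart d h d) \<beta>"
proof -
  have e: "{0..<n} = insert 0 {1..<n}" using assms(1) by auto
  have u: "\<beta>(x := v, 0 := 0) = \<beta>(x := v)" if "x \<ge> 1" for x v
    using that assms(2) by (auto simp: fun_eq_iff)
  show ?thesis unfolding Jmul_def e hpart_def using assms
    by (subst sum.insert) (auto intro!: sum.cong simp: u)
qed

lemma step_lemma:
  assumes fV: "finite V" and F0: "\<forall>\<beta>\<in>mons V j. F \<beta> \<ge> 0"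
    and Fp: "\<forall>\<gamma>\<in>mons V t. F (\<lambda>i. a i + \<gamma> i) > 0"
    and a: "a \<in> mons V k" and j: "j = k + t"
  shows "(\<forall>\<beta>\<in>mons V (Suc j). Jmul V F \<beta> \<ge> 0) \<and>
         (\<forall>\<gamma>\<in>mons V (Suc t). Jmul V F (\<lambda>i. a i + \<gamma> i) > 0)"
proof (intro conjI ballI)
  fix \<beta> assume "\<beta> \<in> mons V (Suc j)"
  then show "Jmul V F \<beta> \<ge> 0" using Jmul_nonneg[OF fV F0] by blast
next
  fix \<gamma> assume g: "\<gamma> \<in> mons V (Suc t)"
  obtain i where i: "i \<in> V" "1 \<le> \<gamma> i" using mons_pos[OF g] by blast
  have m: "(\<lambda>i. a i + \<gamma> i) \<in> mons V (Suc j)" using mons_add[OF a g] j by simp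
  have g': "\<gamma>(i := \<gamma> i - 1) \<in> mons V t" using mons_dec[OF fV g i] .
  have eq: "(\<lambda>l. a l + \<gamma> l)(i := (a i + \<gamma> i) - 1) = (\<lambda>l. a l + (\<gamma>(i := \<gamma> i - 1)) l)"
    using i by (auto simp: fun_eq_iff)
  have pos: "F (\<lambda>l. a l + (\<gamma>(i := \<gamma> i - 1)) l) > 0" using Fp g' by blast
  show "Jmul V F (\<lambda>i. a i + \<gamma> i) > 0"
    apply (rule Jmul_pos[OF fV F0 m i(1)])
    using i apply simp
    using pos eq by simp
qed

theorem lemma5p3:
  fixes n d :: nat and h :: "(nat \<Rightarrow> nat) \<Rightarrow> real"
  assumes "n \<ge> 2" and "d \<ge> 2"
    and "Nneg (mons {0..<n} d) h \<ge> 1"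
    and "\<forall>\<beta>\<in>mons {0..<n} (d + 1). Jmul {0..<n} h \<beta> \<ge> 0"
    and "\<exists>!i. i \<le> d \<and> Rnz (mons {1..<n} i) (gam n d h i) \<noteq> 0"
  shows "Rnz (mons {0..<n} (d + 1)) (Jmul {0..<n} h) \<ge> (n + 1 choose 3) + 1"
proof -
  define V where "V = {1..<n}"
  have fV: "finite V" by (simp add: V_def)
  have V1: "1 \<in> V" using assms(1) by (simp add: V_def)
  have n1: "n \<ge> 1" using assms(1) by simp
  have cV: "card V = n - 1" by (simp add: V_def)
  define H where "H = hpart d h"
  have gamV: "gam n d h i = (if i = 0 then H 0 else (\<lambda>\<beta>. Jmul V (H (i - 1)) \<beta> + H i \<beta>))" for i
    by (simp add: gam_def V_def H_def)
  have gnn: "gam n d h i \<beta> \<ge> 0" if "i \<le> d" "\<beta> \<in> mons V i" for i \<beta>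
  proof -
    have "\<beta>(0 := d + 1 - i) \<in> mons {0..<n} (d + 1)"
      using mons_emb[OF n1, of \<beta> i "d + 1 - i"] that by (simp add: V_def)
    then have "Jmul {0..<n} h (\<beta>(0 := d + 1 - i)) \<ge> 0" using assms(4) by blast
    then show ?thesis using Jmul_block[OF n1, of \<beta> i d h] that by (simp add: V_def)
  qed
  have b0: "\<beta> 0 = 0" if "\<beta> \<in> mons V j" for \<beta> j using that by (simp add: mons_def V_def)
  have topmem: "\<beta> \<in> mons {0..<n} (d + 1)" if "\<beta> \<in> mons V (Suc d)" for \<beta>
  proof -
    have "\<beta>(0 := 0) = \<beta>" using b0[OF that] by auto
    then show ?thesis using mons_emb[OF n1, of \<beta> "Suc d" 0] that by (simp add: V_def)
  qed
  have topeq: "Jmul {0..<n} h \<beta> = Jmul V (H d) \<beta>" if "\<beta> \<in> mons V (Suc d)" for \<beta>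
    using Jmul_top[of n \<beta> h d] n1 b0[OF that] by (simp add: V_def H_def)
  have topnn: "Jmul V (H d) \<beta> \<ge> 0" if "\<beta> \<in> mons V (Suc d)" for \<beta>
    using assms(4) topmem[OF that] topeq[OF that] by (metis Suc_eq_plus1)
  obtain k where k: "k \<le> d" "Rnz (mons V k) (gam n d h k) \<noteq> 0"
    and uniq: "\<And>i. i \<le> d \<Longrightarrow> Rnz (mons V i) (gam n d h i) \<noteq> 0 \<Longrightarrow> i = k"
    using assms(5) unfolding V_def by blast
  have zero: "gam n d h i \<beta> = 0" if "i \<le> d" "i \<noteq> k" "\<beta> \<in> mons V i" for i \<beta>
  proof -
    have "Rnz (mons V i) (gam n d h i) = 0" using uniq that by blast
    then have "{\<alpha>\<in>mons V i. gam n d h i \<alpha> \<noteq> 0} = {}"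
      using finite_mons[OF fV, of i] by (simp add: Rnz_def)
    then show ?thesis using that by blast
  qed
  obtain a where a: "a \<in> mons V k" "gam n d h k a > 0"
  proof -
    have "{\<alpha>\<in>mons V k. gam n d h k \<alpha> \<noteq> 0} \<noteq> {}" using k(2) unfolding Rnz_def by (metis card.empty)
    then obtain \<alpha> where al: "\<alpha> \<in> mons V k" "gam n d h k \<alpha> \<noteq> 0" by blast
    moreover have "gam n d h k \<alpha> \<ge> 0" using gnn[OF k(1) al(1)] .
    ultimately have "gam n d h k \<alpha> > 0" by linarith
    then show ?thesis using that al(1) by blast
  qed
  have low: "\<forall>\<beta>\<in>mons V j. H j \<beta> = 0" if "j < k" for j
    using that
  proof (induction j)
    case 0
    show ?case
    proof
      fix \<beta> assume "\<beta> \<in> mons V 0"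
      then have "gam n d h 0 \<beta> = 0" using zero[of 0 \<beta>] 0 by simp
      then show "H 0 \<beta> = 0" by (simp add: gamV)
    qed
  next
    case (Suc j)
    show ?case
    proof
      fix \<beta> assume b: "\<beta> \<in> mons V (Suc j)"
      have "Jmul V (H j) \<beta> = Jmul V (\<lambda>_. 0) \<beta>"
        apply (rule Jmul_cong[OF fV _ b]) using Suc.IH Suc.prems by simp
      also have "\<dots> = 0" by (simp add: Jmul_def)
      finally show "H (Suc j) \<beta> = 0"
        using zero[of "Suc j" \<beta>] Suc.prems k(1) b by (simp add: gamV)
    qed
  qed
  have Hk: "H k \<beta> = gam n d h k \<beta>" if "\<beta> \<in> mons V k" for \<beta>
  proof (cases k)
    case 0 then show ?thesis by (simp add: gamV)
  next
    case (Suc k')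
    have "Jmul V (H k') \<beta> = Jmul V (\<lambda>_. 0) \<beta>"
      apply (rule Jmul_cong[OF fV _ that[unfolded Suc]]) using low[of k'] Suc by simp
    also have "\<dots> = 0" by (simp add: Jmul_def)
    finally show ?thesis using Suc by (simp add: gamV)
  qed
  have recur: "H j \<beta> = - Jmul V (H (j - 1)) \<beta>" if "k < j" "j \<le> d" "\<beta> \<in> mons V j" for j \<beta>
    using zero[OF that(2) _ that(3)] that(1) by (simp add: gamV)
  have main: "(\<forall>\<beta>\<in>mons V (k + t). (-1)^t * H (k + t) \<beta> \<ge> 0) \<and>
     (\<forall>\<gamma>\<in>mons V t. (-1)^t * H (k + t) (\<lambda>i. a i + \<gamma> i) > 0)" if "k + t \<le> d" for t
    using that
  proof (induction t)
    case 0
    have z: "(\<lambda>i. a i + \<gamma> i) = a" if "\<gamma> \<in> mons V 0" for \<gamma> using mons_zero[OF fV that] by simp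
    then show ?case using Hk a gnn[OF k(1)] by (simp add: z)
  next
    case (Suc t)
    define F where "F = (\<lambda>\<beta>. (-1)^t * H (k + t) \<beta>)"
    have IH: "\<forall>\<beta>\<in>mons V (k + t). F \<beta> \<ge> 0" "\<forall>\<gamma>\<in>mons V t. F (\<lambda>i. a i + \<gamma> i) > 0"
      using Suc.IH Suc.prems unfolding F_def by auto
    have S: "(\<forall>\<beta>\<in>mons V (Suc (k + t)). Jmul V F \<beta> \<ge> 0) \<and>
         (\<forall>\<gamma>\<in>mons V (Suc t). Jmul V F (\<lambda>i. a i + \<gamma> i) > 0)"
      using step_lemma[OF fV IH a(1) refl] .
    have E: "(-1)^(Suc t) * H (k + Suc t) \<beta> = Jmul V F \<beta>" if "\<beta> \<in> mons V (k + Suc t)" for \<beta>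
      using recur[of "k + Suc t" \<beta>] Suc.prems that by (simp add: F_def Jmul_scale)
    have M: "(\<lambda>i. a i + \<gamma> i) \<in> mons V (k + Suc t)" if "\<gamma> \<in> mons V (Suc t)" for \<gamma>
      using mons_add[OF a(1) that] .
    show ?case
    proof (intro conjI ballI)
      fix \<beta> assume b: "\<beta> \<in> mons V (k + Suc t)"
      have "Jmul V F \<beta> \<ge> 0" using S b by simp
      then show "(-1)^(Suc t) * H (k + Suc t) \<beta> \<ge> 0" using E[OF b] by linarith
    next
      fix \<gamma> assume g: "\<gamma> \<in> mons V (Suc t)"
      have "Jmul V F (\<lambda>i. a i + \<gamma> i) > 0" using S g by blast
      then show "(-1)^(Suc t) * H (k + Suc t) (\<lambda>i. a i + \<gamma> i) > 0" using E[OF M[OF g]] by linarith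
    qed
  qed
  define t0 where "t0 = d - k"
  define F where "F = (\<lambda>\<beta>. (-1)^t0 * H d \<beta>)"
  have kt0: "k + t0 = d" using k(1) by (simp add: t0_def)
  have S: "(\<forall>\<beta>\<in>mons V (Suc d). Jmul V F \<beta> \<ge> 0) \<and>
         (\<forall>\<gamma>\<in>mons V (Suc t0). Jmul V F (\<lambda>i. a i + \<gamma> i) > 0)"
  proof -
    have m0: "(\<forall>\<beta>\<in>mons V d. F \<beta> \<ge> 0) \<and> (\<forall>\<gamma>\<in>mons V t0. F (\<lambda>i. a i + \<gamma> i) > 0)"
      using main[of t0] kt0 unfolding F_def by simp
    show ?thesis using step_lemma[OF fV conjunct1[OF m0] conjunct2[OF m0] a(1) kt0[symmetric]] .
  qed
  have S2: "Jmul V F \<beta> = (-1)^t0 * Jmul V (H d) \<beta>" for \<beta> by (simp add: F_def Jmul_scale)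
  define g0 where "g0 = (\<lambda>_::nat. 0::nat)(1 := Suc t0)"
  have g0: "g0 \<in> mons V (Suc t0)"
    using mons_inc[OF fV zero_mons V1, of "Suc t0"] by (simp add: g0_def)
  have ev: "even t0"
  proof (rule ccontr)
    assume "odd t0"
    then have "Jmul V (H d) (\<lambda>i. a i + g0 i) < 0" using S g0 S2 by auto
    moreover have "(\<lambda>i. a i + g0 i) \<in> mons V (Suc d)" using mons_add[OF a(1) g0] kt0 by simp
    ultimately show False using topnn[of "\<lambda>i. a i + g0 i"] by linarith
  qed
  have posTop: "Jmul V (H d) (\<lambda>i. a i + \<gamma> i) > 0" if "\<gamma> \<in> mons V (Suc t0)" for \<gamma>
    using S S2 ev that by auto
  have t0ge: "t0 \<ge> 2"
  proof -
    have "{\<alpha>\<in>mons {0..<n} d. h \<alpha> < 0} \<noteq> {}" using assms(3) unfolding Nneg_def by (metis card.empty not_one_le_zero)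
    then obtain \<alpha> where al: "\<alpha> \<in> mons {0..<n} d" "h \<alpha> < 0" by blast
    have e: "{0..<n} = insert 0 V" using n1 by (auto simp: V_def)
    have sV: "sum \<alpha> {0..<n} = \<alpha> 0 + sum \<alpha> V" unfolding e by (simp add: fV V_def)
    define j where "j = d - \<alpha> 0"
    have a0: "\<alpha> 0 \<le> d" using al(1) sV by (simp add: mons_def)
    have "sum (\<alpha>(0 := 0)) V = sum \<alpha> V" by (rule sum.cong) (auto simp: V_def)
    then have bm: "\<alpha>(0 := 0) \<in> mons V j" using al(1) sV a0
      by (auto simp: mons_def j_def e)
    have Hj: "H j (\<alpha>(0 := 0)) = h \<alpha>" using a0 by (simp add: H_def hpart_def j_def)
    have jk: "j \<ge> k"
    proof (rule ccontr)
      assume "\<not> j \<ge> k" then show False using low[of j] bm Hj al(2) by simp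
    qed
    have jd: "j \<le> d" by (simp add: j_def)
    have "(-1)^(j - k) * H j (\<alpha>(0 := 0)) \<ge> 0" using main[of "j - k"] jk jd bm by simp
    then have od: "odd (j - k)"
    proof (rule contrapos_pp)
      assume "\<not> odd (j - k)"
      then have "(-1::real)^(j - k) = 1" by simp
      then show "\<not> (-1)^(j - k) * H j (\<alpha>(0 := 0)) \<ge> 0" using Hj al(2) by simp
    qed
    have "t0 \<noteq> j - k" using ev od by auto
    moreover have "j - k \<noteq> 0" using od by auto
    ultimately show ?thesis using jd jk unfolding t0_def by linarith
  qed
  define S where "S = {\<alpha>\<in>mons {0..<n} (d + 1). Jmul {0..<n} h \<alpha> \<noteq> 0}"
  define p where "p = a(0 := d + 1 - k)"
  define A where "A = (\<lambda>\<gamma> i. a i + \<gamma> i) ` mons V (Suc t0)"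
  have pS: "p \<in> S"
  proof -
    have "p \<in> mons {0..<n} (d + 1)" using mons_emb[OF n1, of a k "d + 1 - k"] a k(1)
      by (simp add: V_def p_def)
    moreover have "Jmul {0..<n} h p = gam n d h k a"
      using Jmul_block[OF n1, of a k d h] a k(1) by (simp add: V_def p_def)
    ultimately show ?thesis using a by (simp add: S_def)
  qed
  have AS: "A \<subseteq> S"
  proof
    fix x assume "x \<in> A"
    then obtain \<gamma> where g: "\<gamma> \<in> mons V (Suc t0)" "x = (\<lambda>i. a i + \<gamma> i)" by (auto simp: A_def)
    have xm: "x \<in> mons V (Suc d)" using mons_add[OF a(1) g(1)] kt0 g(2) by simp
    show "x \<in> S" using topmem[OF xm] topeq[OF xm] posTop[OF g(1)] g(2) by (simp add: S_def)
  qed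
  have pA: "p \<notin> A"
  proof
    assume "p \<in> A"
    then obtain \<gamma> where g: "\<gamma> \<in> mons V (Suc t0)" "p = (\<lambda>i. a i + \<gamma> i)" by (auto simp: A_def)
    have "p 0 = 0" using g b0[OF a(1)] b0[OF g(1)] by simp
    moreover have "p 0 = d + 1 - k" by (simp add: p_def)
    ultimately show False using k(1) by simp
  qed
  have finS: "finite S" using finite_mons[of "{0..<n}" "d + 1"] by (simp add: S_def)
  have cA: "card A = card (mons V (Suc t0))"
    unfolding A_def by (rule card_image) (auto simp: inj_on_def fun_eq_iff)
  have c3: "card (mons V 3) \<le> card (mons V (Suc t0))"
  proof (rule card_inj_on_le[of "\<lambda>\<gamma>. \<gamma>(1 := \<gamma> 1 + (t0 - 2))"])
    show "inj_on (\<lambda>\<gamma>. \<gamma>(1 := \<gamma> 1 + (t0 - 2))) (mons V 3)"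
    proof (rule inj_onI)
      fix x y assume "x(1 := x 1 + (t0 - 2)) = y(1 := y 1 + (t0 - 2))"
      then have "\<forall>i. (x(1 := x 1 + (t0 - 2))) i = (y(1 := y 1 + (t0 - 2))) i" by simp
      then show "x = y" by (metis add_right_cancel fun_upd_apply ext)
    qed
    show "(\<lambda>\<gamma>. \<gamma>(1 := \<gamma> 1 + (t0 - 2))) ` mons V 3 \<subseteq> mons V (Suc t0)"
      using mons_inc[OF fV _ V1, of _ 3 "t0 - 2"] t0ge by auto
    show "finite (mons V (Suc t0))" by (rule finite_mons[OF fV])
  qed
  have cc: "(n + 1 choose 3) \<le> card (mons V 3)"
    using card_mons3[OF fV] cV n1 by simp
  have "card (insert p A) \<le> card S" using pS AS finS by (intro card_mono) auto
  moreover have "card (insert p A) = Suc (card A)"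
    using pA finite_subset[OF AS finS] by simp
  ultimately have "(n + 1 choose 3) + 1 \<le> card S" using cA c3 cc by linarith
  then show ?thesis by (simp add: Rnz_def S_def)
qed

end
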